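(* Let $c>0$, $0<\delta<1$, $M\ge1$ and let $\chi:\mathbb R\to\mathbb R$ satisfy $\chi(t)=ct$ for every $t\ge-\delta$ and $\chi|_{(-\infty,0]}\in\widetilde{\mathcal W}^-\cup\mathcal W^+_M$. Let $g$ be a smooth function on $\mathbb R$ supported in $[-1,1]$ with $g(t)=g(-t)$, $0\le g\le1$, $\int_{\mathbb R}g=1$; put $g_\epsilon(t)=\epsilon^{-1}g(t/\epsilon)$ and $\chi_\epsilon=\chi*g_\epsilon$ for $\epsilon>0$. Then: (i) if $\chi|_{(-\infty,0]}\in\widetilde{\mathcal W}^-$, then $\chi_\epsilon|_{(-\infty,0]}\in\widetilde{\mathcal W}^-$ for every $0<\epsilon<\delta$, $\chi_\epsilon\searrow\chi$ as $\epsilon\searrow0$, and $\sup(\chi_\epsilon-\chi)\le c\epsilon$; (ii) if $\chi|_{(-\infty,0]}\in\mathcal W^+_M$ and $0<\epsilon<\delta^2/2$, then $\chi_\epsilon|_{(-\infty,0]}\in\mathcal W^+_{M/(1-\delta)}$; moreover, if $0<\epsilon<\delta^2/8$, then $\overline\chi_\epsilon:=\chi_\epsilon(\cdot+\epsilon)-c\epsilon$ satisfies $\overline\chi_\epsilon|_{(-\infty,0]}\in\mathcal W^+_{M/(1-\delta)^2}$ and $\overline\chi_\epsilon\ge\chi-c\epsilon$, and $\overline\chi_\epsilon\to\chi$ uniformly on compact subsets of $\mathbb R$ as $\epsilon\to0$.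
   Context: $\widetilde{\mathcal W}^-$: convex non-decreasing $\chi:\mathbb R_{\le0}\to\mathbb R_{\le0}$, $\chi(0)=0$, $\chi\not\equiv0$. $\mathcal W^+_M$: increasing concave $\chi:\mathbb R_{\le0}\to\mathbb R_{\le0}$, $\chi(0)=0$, $\chi<0$ on $(-\infty,0)$, $|t\chi'(t)|\le M|\chi(t)|$ for $t\le0$. *)

theory Defs
  imports "HOL-Analysis.Analysis"
begin

definition smooth_real :: "(real \<Rightarrow> real) \<Rightarrow> bool" where
  "smooth_real g \<longleftrightarrow>
     (\<forall>k::nat. \<forall>x. (((deriv ^^ k) g) has_real_derivative ((deriv ^^ Suc k) g x)) (at x))"

definition Wminus_tilde :: "(real \<Rightarrow> real) \<Rightarrow> bool" where
  "Wminus_tilde \<phi> \<longleftrightarrow>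
     convex_on {..0} \<phi> \<and> mono_on {..0} \<phi> \<and> (\<forall>t\<le>0. \<phi> t \<le> 0) \<and> \<phi> 0 = 0
     \<and> (\<exists>t\<le>0. \<phi> t \<noteq> 0)"

text \<open>The class W-plus-M (only the restriction of chi to t <= 0 matters).
  The derivative condition is imposed at every t < 0 where chi is differentiable
  (at t = 0 it is trivial since t = 0).\<close>
definition Wplus :: "real \<Rightarrow> (real \<Rightarrow> real) \<Rightarrow> bool" where
  "Wplus M \<phi> \<longleftrightarrow>
     concave_on {..0} \<phi> \<and> mono_on {..0} \<phi> \<and> (\<forall>t\<le>0. \<phi> t \<le> 0) \<and> \<phi> 0 = 0
     \<and> (\<forall>t<0. \<phi> t < 0)
     \<and> (\<forall>t<0. \<forall>D. (\<phi> has_real_derivative D) (at t) \<longrightarrow> \<bar>t * D\<bar> \<le> M * \<bar>\<phi> t\<bar>)"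

definition kernel_eps :: "(real \<Rightarrow> real) \<Rightarrow> real \<Rightarrow> real \<Rightarrow> real" where
  "kernel_eps g \<epsilon> t = g (t / \<epsilon>) / \<epsilon>"

definition conv :: "(real \<Rightarrow> real) \<Rightarrow> (real \<Rightarrow> real) \<Rightarrow> real \<Rightarrow> real" where
  "conv f h t = integral UNIV (\<lambda>s. f (t - s) * h s)"

end

theory Submission
  imports Defs
begin
definition av :: "(real\<Rightarrow>real) \<Rightarrow> (real\<Rightarrow>real) \<Rightarrow> real \<Rightarrow> real \<Rightarrow> real" where
 "av g f e t = integral {-1..1} (\<lambda>s. f (t - e * s) * g s)"

definition good :: "(real\<Rightarrow>real) \<Rightarrow> bool" where
 "good g \<longleftrightarrow> continuous_on UNIV g \<and> (\<forall>s. 0 \<le> g s) \<and> (\<forall>s. g (-s) = g s) \<and> (g has_integral 1) {-1..1}"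

lemma av_integrable:
  assumes "good g" "continuous_on UNIV f"
  shows "(\<lambda>s. f (t - e * s) * g s) integrable_on {-1..1}"
proof -
  have c0: "continuous_on {-1..1} (\<lambda>s. t - e * s)" by (intro continuous_intros)
  have c1: "continuous_on {-1..1} (\<lambda>s. f (t - e * s))"
    by (rule continuous_on_compose2[OF assms(2) c0]) simp
  have c2: "continuous_on {-1..1} g" using assms(1) continuous_on_subset unfolding good_def by blast
  have "continuous_on {-1..1} (\<lambda>s. f (t - e * s) * g s)" by (rule continuous_on_mult[OF c1 c2])
  then show ?thesis by (rule integrable_continuous_interval)
qed

lemma good_odd:
  assumes "good g"
  shows "((\<lambda>s. s * g s) has_integral 0) {-1..1}"
proof -
  have c2: "continuous_on {-1..1} g" using assms(1) continuous_on_subset unfolding good_def by blast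
  have c: "continuous_on {-1..1} (\<lambda>s. s * g s)" by (rule continuous_on_mult[OF continuous_on_id c2])
  then have int: "(\<lambda>s. s * g s) integrable_on {-1..1}" by (rule integrable_continuous_interval)
  define I where "I = integral {-1..1} (\<lambda>s. s * g s)"
  have hI: "((\<lambda>s. s * g s) has_integral I) {-1..1}" unfolding I_def by (rule integrable_integral[OF int])
  then have "((\<lambda>x. (\<lambda>s. s * g s) (- x)) has_integral I) {- 1..- (- 1)}"
    by (intro has_integral_reflect_real[THEN iffD2])
  then have r: "((\<lambda>s. (-s) * g (-s)) has_integral I) {-1..1}" by (simp only: minus_minus)
  have ev: "\<And>s. g (-s) = g s" using assms unfolding good_def by blast
  have "(\<lambda>s. (-s) * g (-s)) = (\<lambda>s. - (s * g s))" by (rule ext) (simp only: ev mult_minus_left)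
  with r have "((\<lambda>s. - (s * g s)) has_integral I) {-1..1}" by (simp only:)
  then have "((\<lambda>s. - (- (s * g s))) has_integral - I) {-1..1}" by (rule has_integral_neg)
  then have "((\<lambda>s. s * g s) has_integral -I) {-1..1}" by (simp only: minus_minus)
  then have "I = -I" using hI has_integral_unique by blast
  then have "I = 0" by simp
  then show ?thesis using hI by simp
qed

lemma av_lin:
  assumes "good g" "\<forall>s\<in>{-1..1}. f (t - e * s) = a*(t - e * s) + b"
  shows "av g f e t = a*t + b"
proof -
  have h1: "((\<lambda>s. (a*t+b) * g s) has_integral (a*t+b)*1) {-1..1}"
    using assms(1) unfolding good_def by (intro has_integral_mult_right) auto
  have h2: "((\<lambda>s. (a*e) * (s * g s)) has_integral (a*e)*0) {-1..1}"
    using good_odd[OF assms(1)] by (intro has_integral_mult_right) auto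
  have "((\<lambda>s. (a*t+b) * g s - (a*e) * (s * g s)) has_integral (a*t+b)) {-1..1}"
    using has_integral_diff[OF h1 h2] by simp
  then have "((\<lambda>s. f (t - e * s) * g s) has_integral (a*t+b)) {-1..1}"
  proof (rule has_integral_eq[rotated])
    fix x :: real assume "x \<in> {-1..1}"
    then have "f (t - e * x) = a*(t - e * x) + b" using assms(2) by blast
    then show "(a*t+b) * g x - (a*e) * (x * g x) = f (t - e * x) * g x" unfolding \<open>f (t - e * x) = a*(t - e * x) + b\<close> by (simp add: algebra_simps)
  qed
  then show ?thesis unfolding av_def by blast
qed

lemma av_le:
  assumes "good g" "continuous_on UNIV f1" "continuous_on UNIV f2"
    "\<forall>s\<in>{-1..1}. f1 (t - e * s) \<le> f2 (t' - e' * s)"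
  shows "av g f1 e t \<le> av g f2 e' t'"
  unfolding av_def
proof (rule integral_le)
  show "(\<lambda>s. f1 (t - e * s) * g s) integrable_on {-1..1}" by (rule av_integrable[OF assms(1,2)])
  show "(\<lambda>s. f2 (t' - e' * s) * g s) integrable_on {-1..1}" by (rule av_integrable[OF assms(1,3)])
  show "f1 (t - e * s) * g s \<le> f2 (t' - e' * s) * g s" if "s \<in> {-1..1}" for s
    using assms(1,4) that unfolding good_def by (auto intro: mult_right_mono)
qed

lemma av_const: "good g \<Longrightarrow> av g (\<lambda>x. L) e t = L"
  using av_lin[of g "\<lambda>x. L" t e 0 L] by simp

lemma av_upper:
  assumes "good g" "continuous_on UNIV f" "\<forall>s\<in>{-1..1}. f (t - e * s) \<le> L"
  shows "av g f e t \<le> L"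
  using av_le[OF assms(1,2) continuous_on_const, of t e L t e] assms(3) av_const[OF assms(1)] by simp

lemma av_lower:
  assumes "good g" "continuous_on UNIV f" "\<forall>s\<in>{-1..1}. L \<le> f (t - e * s)"
  shows "L \<le> av g f e t"
  using av_le[OF assms(1) continuous_on_const assms(2), of L t e t e] assms(3) av_const[OF assms(1)] by simp

lemma av_abs:
  assumes "good g" "continuous_on UNIV f" "\<forall>s\<in>{-1..1}. \<bar>f (t - e * s) - L\<bar> \<le> \<eta>"
  shows "\<bar>av g f e t - L\<bar> \<le> \<eta>"
proof -
  have u: "f (t - e * s) \<le> L + \<eta>" and l: "L - \<eta> \<le> f (t - e * s)" if "s \<in> {-1..1}" for s
  proof -
    have "\<bar>f (t - e * s) - L\<bar> \<le> \<eta>" using assms(3) that by blast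
    then show "f (t - e * s) \<le> L + \<eta>" by linarith
    from \<open>\<bar>f (t - e * s) - L\<bar> \<le> \<eta>\<close> show "L - \<eta> \<le> f (t - e * s)" by linarith
  qed
  have "av g f e t \<le> L + \<eta>" using u by (intro av_upper[OF assms(1,2)]) blast
  moreover have "L - \<eta> \<le> av g f e t" using l by (intro av_lower[OF assms(1,2)]) blast
  ultimately show ?thesis by linarith
qed

lemma av_mono:
  assumes "good g" "continuous_on UNIV f" "mono f" "e \<ge> 0"
  shows "mono (av g f e)"
proof (rule monoI)
  fix x y :: real assume xy: "x \<le> y"
  show "av g f e x \<le> av g f e y"
  proof (rule av_le[OF assms(1,2,2)], intro ballI)
    fix s :: real assume "s \<in> {-1..1}"
    have "x - e * s \<le> y - e * s" using xy by simp
    then show "f (x - e * s) \<le> f (y - e * s)" by (rule monoD[OF assms(3)])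
  qed
qed

lemma av_convex:
  assumes "good g" "continuous_on UNIV f" "convex_on UNIV f"
  shows "convex_on UNIV (av g f e)"
proof (rule convex_onI)
  fix u x y :: real assume u: "0 < u" "u < 1"
  have i1: "(\<lambda>s. f (x - e * s) * g s) integrable_on {-1..1}" by (rule av_integrable[OF assms(1,2)])
  have i2: "(\<lambda>s. f (y - e * s) * g s) integrable_on {-1..1}" by (rule av_integrable[OF assms(1,2)])
  have "av g f e ((1 - u) *\<^sub>R x + u *\<^sub>R y) \<le>
        integral {-1..1} (\<lambda>s. (1-u) * (f (x - e * s) * g s) + u * (f (y - e * s) * g s))"
    unfolding av_def
  proof (rule integral_le)
    show "(\<lambda>s. f ((1 - u) *\<^sub>R x + u *\<^sub>R y - e * s) * g s) integrable_on {-1..1}"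
      by (rule av_integrable[OF assms(1,2)])
    show "(\<lambda>s. (1-u) * (f (x - e * s) * g s) + u * (f (y - e * s) * g s)) integrable_on {-1..1}"
      using i1 i2 by (intro integrable_add integrable_on_mult_right)
    fix s :: real
    have "f ((1 - u) *\<^sub>R x + u *\<^sub>R y - e * s) = f ((1 - u) *\<^sub>R (x - e * s) + u *\<^sub>R (y - e * s))"
      by (simp add: algebra_simps)
    also have "\<dots> \<le> (1-u) * f (x - e * s) + u * f (y - e * s)"
      using convex_onD[OF assms(3), of u "x - e * s" "y - e * s"] u by auto
    finally have le: "f ((1 - u) *\<^sub>R x + u *\<^sub>R y - e * s) \<le> (1-u) * f (x - e * s) + u * f (y - e * s)" .
    have gs: "0 \<le> g s" using assms(1) unfolding good_def by blast
    have "f ((1 - u) *\<^sub>R x + u *\<^sub>R y - e * s) * g s \<le> ((1-u) * f (x - e * s) + u * f (y - e * s)) * g s"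
      using le gs by (rule mult_right_mono)
    also have "\<dots> = (1-u) * (f (x - e * s) * g s) + u * (f (y - e * s) * g s)" by (simp add: algebra_simps)
    finally show "f ((1 - u) *\<^sub>R x + u *\<^sub>R y - e * s) * g s \<le> (1-u) * (f (x - e * s) * g s) + u * (f (y - e * s) * g s)" .
  qed
  also have "\<dots> = (1 - u) * av g f e x + u * av g f e y"
    unfolding av_def using i1 i2 by (simp add: integral_add integrable_on_mult_right)
  finally show "av g f e ((1 - u) *\<^sub>R x + u *\<^sub>R y) \<le> (1 - u) * av g f e x + u * av g f e y" .
qed auto

definition sl :: "(real \<Rightarrow> real) \<Rightarrow> real \<Rightarrow> real \<Rightarrow> real" where
  "sl f x y = (f y - f x) / (y - x)"

lemma frac_le: "0 < (b::real) \<Longrightarrow> 0 < d \<Longrightarrow> (a / b \<le> c / d) = (a * d \<le> c * b)"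
  by (simp add: field_simps)

lemma sl_iff1: "x < y \<Longrightarrow> y < z \<Longrightarrow> (sl f x y \<le> sl f y z) \<longleftrightarrow> (sl f x y \<le> sl f x z)"
proof -
  assume a: "x < y" "y < z"
  have "sl f x y \<le> sl f y z \<longleftrightarrow> (f y - f x) * (z - y) \<le> (f z - f y) * (y - x)"
    using a unfolding sl_def by (simp add: divide_le_eq le_divide_eq field_simps)
  also have "\<dots> \<longleftrightarrow> (f y - f x) * (z - x) \<le> (f z - f x) * (y - x)"
    by (simp add: algebra_simps)
  also have "\<dots> \<longleftrightarrow> sl f x y \<le> sl f x z"
    using a unfolding sl_def by (simp add: divide_le_eq le_divide_eq field_simps)
  finally show ?thesis .
qed

lemma sl_iff2: "x < y \<Longrightarrow> y < z \<Longrightarrow> (sl f x y \<le> sl f y z) \<longleftrightarrow> (sl f x z \<le> sl f y z)"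
proof -
  assume a: "x < y" "y < z"
  have "sl f x y \<le> sl f y z \<longleftrightarrow> (f y - f x) * (z - y) \<le> (f z - f y) * (y - x)"
    using a unfolding sl_def by (simp add: divide_le_eq le_divide_eq field_simps)
  also have "\<dots> \<longleftrightarrow> (f z - f x) * (z - y) \<le> (f z - f y) * (z - x)"
    by (simp add: algebra_simps)
  also have "\<dots> \<longleftrightarrow> sl f x z \<le> sl f y z"
    using a unfolding sl_def by (simp add: divide_le_eq le_divide_eq field_simps)
  finally show ?thesis .
qed

lemma cvx_sl:
  assumes "convex_on S f" "x \<in> S" "z \<in> S" "x < y" "y < z"
  shows "sl f x y \<le> sl f y z"
proof -
  define t where "t = (y - x) / (z - x)"
  have t: "0 \<le> t" "t \<le> 1" using assms(4,5) by (auto simp: t_def field_simps)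
  have "t * (z - x) = y - x" using assms(4,5) by (simp add: t_def)
  then have y: "y = (1 - t) *\<^sub>R x + t *\<^sub>R z" by (simp add: algebra_simps)
  have "f y \<le> (1 - t) * f x + t * f z" using convex_onD[OF assms(1) t assms(2,3)] y by simp
  then have "f y - f x \<le> t * (f z - f x)" by (simp add: algebra_simps)
  then have "(f y - f x) * (z - x) \<le> (t * (f z - f x)) * (z - x)"
    by (rule mult_right_mono) (use assms in auto)
  also have "(t * (f z - f x)) * (z - x) = (f z - f x) * (t * (z - x))" by (simp only: ac_simps)
  finally have "(f y - f x) * (z - x) \<le> (f z - f x) * (y - x)" using \<open>t * (z - x) = y - x\<close> by simp
  then have "sl f x y \<le> sl f x z" using assms(4,5) unfolding sl_def by (simp add: frac_le)
  then show ?thesis using sl_iff1[OF assms(4,5)] by blast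
qed

lemma cvx_slI:
  assumes "\<And>x y z. x < y \<Longrightarrow> y < z \<Longrightarrow> sl f x y \<le> sl f y z"
  shows "convex_on UNIV f"
proof (rule convex_on_linorderI)
  fix t x y :: real assume t: "0 < t" "t < 1" and xy: "x < y"
  define z where "z = (1 - t) *\<^sub>R x + t *\<^sub>R y"
  have "z = x + t * (y - x)" by (simp add: z_def algebra_simps)
  moreover have "0 < t * (y - x)" "t * (y - x) < y - x" using t xy by auto
  ultimately have xz: "x < z" "z < y" by auto
  have d: "0 < y - x" using xy by simp
  have e1: "z - x = t * (y - x)" and e2: "y - z = (1 - t) * (y - x)" by (auto simp: z_def algebra_simps)
  have "sl f x z \<le> sl f z y" using assms xz by blast
  then have "(f z - f x) * (y - z) \<le> (f y - f z) * (z - x)"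
    unfolding sl_def using frac_le[of "z - x" "y - z" "f z - f x" "f y - f z"] xz by simp
  then have "(f z - f x) * ((1 - t) * (y - x)) \<le> (f y - f z) * (t * (y - x))" by (simp only: e1 e2)
  then have "((f z - f x) * (1 - t)) * (y - x) \<le> ((f y - f z) * t) * (y - x)" by (simp only: mult.assoc)
  then have *: "(f z - f x) * (1 - t) \<le> (f y - f z) * t" using d by (rule mult_right_le_imp_le)
  have a1: "(f z - f x) * (1 - t) = f z - t * f z - f x + t * f x" by (simp add: algebra_simps)
  have a2: "(f y - f z) * t = t * f y - t * f z" by (simp add: algebra_simps)
  have a3: "(1 - t) * f x + t * f y = f x - t * f x + t * f y" by (simp add: algebra_simps)
  have "f z \<le> (1 - t) * f x + t * f y" using * unfolding a1 a2 a3 by linarith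
  then show "f ((1 - t) *\<^sub>R x + t *\<^sub>R y) \<le> (1 - t) * f x + t * f y" by (simp only: z_def)
qed auto

lemma cvx_glue:
  fixes f :: "real \<Rightarrow> real"
  assumes S1: "convex_on {..b} f" and S2: "convex_on {a..} f" and ab: "a < b"
  shows "convex_on UNIV f"
proof (rule cvx_slI)
  fix x y z :: real assume xy: "x < y" and yz: "y < z"
  show "sl f x y \<le> sl f y z"
  proof (cases "z \<le> b")
    case True then show ?thesis by (intro cvx_sl[OF S1 _ _ xy yz]) (use xy yz in simp_all)
  next
    case zb: False
    show ?thesis
    proof (cases "a \<le> x")
      case True then show ?thesis by (intro cvx_sl[OF S2 _ _ xy yz]) (use xy yz in simp_all)
    next
      case xa: False
      show ?thesis
      proof (cases "y < b")
        case True
        define p where "p = max a y"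
        define m' where "m' = p + (b - p) / 3"
        define m where "m = p + 2 * (b - p) / 3"
        have pb: "p < b" using True ab by (auto simp: p_def)
        have o1: "y \<le> p" "a \<le> p" by (auto simp: p_def)
        have o2: "p < m'" "m' < m" "m < b" using pb unfolding m'_def m_def by (simp_all add: field_simps)
        note o = o1 o2
        have ym': "y < m'" using o by linarith
        have xb: "x \<le> b" using o xy by linarith
        have mb: "m \<le> b" using o by linarith
        have m'a: "a \<le> m'" using o by linarith
        have ym: "y < m" using o by linarith
        have mz: "m < z" using o zb by linarith
        have A: "sl f x y \<le> sl f y m" by (rule cvx_sl[OF S1]) (use xb mb xy ym in auto)
        have B0: "sl f y m' \<le> sl f m' m" by (rule cvx_sl[OF S1]) (use mb o ym' in auto)
        then have B: "sl f y m \<le> sl f m' m" using sl_iff2[of y m' m f] ym' o(4) by blast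
        have C: "sl f m' m \<le> sl f m z" by (rule cvx_sl[OF S2]) (use m'a o mz in auto)
        have "sl f y m \<le> sl f y z" using sl_iff1[of y m z f] B C ym mz by simp
        then show ?thesis using A by linarith
      next
        case False
        define m where "m = (a + b) / 2"
        define m' where "m' = (m + b) / 2"
        have o: "x < m" "a \<le> m" "m < m'" "m' < b" "b \<le> y" using ab xa False unfolding m_def m'_def by (simp_all add: field_simps)
        have my: "m < y" using o by linarith
        have m'y: "m' < y" using o by linarith
        have m'b: "m' \<le> b" using o by linarith
        have m'a: "a \<le> m'" using o by linarith
        have A: "sl f m y \<le> sl f y z" by (rule cvx_sl[OF S2]) (use o my yz in auto)
        have B0: "sl f m m' \<le> sl f m' y" by (rule cvx_sl[OF S2]) (use o m'y in auto)
        then have B: "sl f m m' \<le> sl f m y" using sl_iff1[of m m' y f] o(3) m'y by blast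
        have C: "sl f x m \<le> sl f m m'" by (rule cvx_sl[OF S1]) (use o m'b in auto)
        have "sl f x y \<le> sl f m y" using sl_iff2[of x m y f] B C o(1) my by simp
        then show ?thesis using A by linarith
      qed
    qed
  qed
qed

lemma sl_neg: "sl (\<lambda>x. - f x) x y = - sl f x y"
  unfolding sl_def by (simp add: minus_divide_left)

lemma ccv_sl:
  assumes "concave_on S f" "x \<in> S" "z \<in> S" "x < y" "y < z"
  shows "sl f y z \<le> sl f x y"
proof -
  have "sl (\<lambda>x. - f x) x y \<le> sl (\<lambda>x. - f x) y z"
    using assms(1) by (intro cvx_sl[OF _ assms(2-5)]) (simp add: concave_on_def)
  then show ?thesis unfolding sl_neg by simp
qed

lemma ccv_glue:
  fixes f :: "real \<Rightarrow> real"
  assumes "concave_on {..b} f" "concave_on {a..} f" "a < b"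
  shows "concave_on UNIV f"
  using cvx_glue[of b "\<lambda>x. - f x" a] assms unfolding concave_on_def by blast

lemma cvx_deriv_right:
  assumes "convex_on UNIV f" "(f has_real_derivative D) (at w)" "w < y"
  shows "D \<le> sl f w y"
proof -
  have "((\<lambda>k. (f (w + k) - f w) / k) \<longlongrightarrow> D) (at 0)" using assms(2) by (simp add: DERIV_def)
  then have lim: "((\<lambda>k. (f (w + k) - f w) / k) \<longlongrightarrow> D) (at_right 0)" by (rule filterlim_mono) (auto simp: at_le)
  have ev: "\<forall>\<^sub>F k in at_right 0. (f (w + k) - f w) / k \<le> sl f w y"
    unfolding eventually_at_right_field
  proof (intro exI[of _ "y - w"] conjI allI impI)
    show "(0::real) < y - w" using assms(3) by simp
    fix k :: real assume k: "0 < k" "k < y - w"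
    then have "sl f w (w+k) \<le> sl f (w+k) y" by (intro cvx_sl[OF assms(1)]) simp_all
    then have "sl f w (w+k) \<le> sl f w y" using sl_iff1[of w "w+k" y f] k by auto
    then show "(f (w + k) - f w) / k \<le> sl f w y" unfolding sl_def by simp
  qed
  show ?thesis by (rule tendsto_upperbound[OF lim ev]) simp
qed

lemma cvx_deriv_left:
  assumes "convex_on UNIV f" "(f has_real_derivative D) (at w)" "y < w"
  shows "sl f y w \<le> D"
proof -
  have "((\<lambda>k. (f (w + k) - f w) / k) \<longlongrightarrow> D) (at 0)" using assms(2) by (simp add: DERIV_def)
  then have lim: "((\<lambda>k. (f (w + k) - f w) / k) \<longlongrightarrow> D) (at_left 0)" by (rule filterlim_mono) (auto simp: at_le)
  have ev: "\<forall>\<^sub>F k in at_left 0. sl f y w \<le> (f (w + k) - f w) / k"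
    unfolding eventually_at_left_field
  proof (intro exI[of _ "y - w"] conjI allI impI)
    show "y - w < (0::real)" using assms(3) by simp
    fix k :: real assume k: "y - w < k" "k < 0"
    then have "sl f y (w+k) \<le> sl f (w+k) w" by (intro cvx_sl[OF assms(1)]) simp_all
    then have "sl f y w \<le> sl f (w+k) w" using sl_iff2[of y "w+k" w f] k by auto
    moreover have "sl f (w+k) w = (f (w + k) - f w) / k" unfolding sl_def using k
      by (simp add: field_simps)
    ultimately show "sl f y w \<le> (f (w + k) - f w) / k" by simp
  qed
  show ?thesis by (rule tendsto_lowerbound[OF lim ev]) simp
qed

lemma ccv_deriv_right:
  assumes "concave_on UNIV f" "(f has_real_derivative D) (at w)" "w < y"
  shows "sl f w y \<le> D"
proof -
  have "convex_on UNIV (\<lambda>x. - f x)" using assms(1) by (simp add: concave_on_def)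
  moreover have "((\<lambda>x. - f x) has_real_derivative -D) (at w)" using DERIV_minus[OF assms(2)] .
  ultimately have "-D \<le> sl (\<lambda>x. - f x) w y" using cvx_deriv_right assms(3) by blast
  then show ?thesis unfolding sl_neg by simp
qed

lemma ccv_deriv_left:
  assumes "concave_on UNIV f" "(f has_real_derivative D) (at w)" "y < w"
  shows "D \<le> sl f y w"
proof -
  have "convex_on UNIV (\<lambda>x. - f x)" using assms(1) by (simp add: concave_on_def)
  moreover have "((\<lambda>x. - f x) has_real_derivative -D) (at w)" using DERIV_minus[OF assms(2)] .
  ultimately have "sl (\<lambda>x. - f x) y w \<le> -D" using cvx_deriv_left assms(3) by blast
  then show ?thesis unfolding sl_neg by simp
qed

definition rd :: "(real \<Rightarrow> real) \<Rightarrow> real \<Rightarrow> real" where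
  "rd f w = Inf ((\<lambda>x. sl f w x) ` {w<..})"

lemma rd_bdd:
  assumes "convex_on UNIV f"
  shows "bdd_below ((\<lambda>x. sl f w x) ` {w<..})"
proof (rule bdd_belowI2)
  fix x assume "x \<in> {w<..}"
  then show "sl f (w - 1) w \<le> sl f w x" by (intro cvx_sl[OF assms]) auto
qed

lemma rd_le:
  assumes "convex_on UNIV f" "w < x"
  shows "rd f w \<le> sl f w x"
  unfolding rd_def by (rule cInf_lower[OF _ rd_bdd[OF assms(1)]]) (use assms(2) in auto)

lemma rd_ge:
  assumes "convex_on UNIV f" "y < w"
  shows "sl f y w \<le> rd f w"
  unfolding rd_def
proof (rule cInf_greatest)
  show "(\<lambda>x. sl f w x) ` {w<..} \<noteq> {}" by auto
  fix z assume "z \<in> (\<lambda>x. sl f w x) ` {w<..}"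
  then obtain x where x: "w < x" "z = sl f w x" by auto
  show "sl f y w \<le> z" unfolding x(2) by (rule cvx_sl[OF assms(1)]) (use x assms in auto)
qed

lemma rd_mono:
  assumes "convex_on UNIV f"
  shows "mono (rd f)"
proof (rule monoI)
  fix u v :: real assume "u \<le> v"
  show "rd f u \<le> rd f v"
  proof (cases "u = v")
    case False
    then have "u < v" using \<open>u \<le> v\<close> by simp
    then show ?thesis using rd_le[OF assms \<open>u < v\<close>] rd_ge[OF assms \<open>u < v\<close>] by linarith
  qed simp
qed

lemma rd_deriv:
  assumes f: "convex_on UNIV f" and c: "isCont (rd f) w"
  shows "(f has_real_derivative rd f w) (at w)"
  unfolding DERIV_def
proof (rule LIM_zero_cancel)
  have "((\<lambda>k. rd f (w + k)) \<longlongrightarrow> rd f w) (at 0)" using c by (simp add: isCont_iff)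
  then have "((\<lambda>k. rd f (w + k) - rd f w) \<longlongrightarrow> 0) (at 0)" by (rule LIM_zero)
  then have lim: "((\<lambda>k. \<bar>rd f (w + k) - rd f w\<bar>) \<longlongrightarrow> 0) (at 0)" by (rule tendsto_rabs_zero)
  have ev: "\<forall>\<^sub>F k in at 0. norm ((f (w + k) - f w) / k - rd f w) \<le> \<bar>rd f (w + k) - rd f w\<bar>"
    unfolding eventually_at_filter
  proof (intro always_eventually allI impI)
    fix k :: real assume "k \<noteq> 0"
    show "norm ((f (w + k) - f w) / k - rd f w) \<le> \<bar>rd f (w + k) - rd f w\<bar>"
    proof (cases "0 < k")
      case True
      have q: "(f (w + k) - f w) / k = sl f w (w + k)" unfolding sl_def by simp
      have "rd f w \<le> sl f w (w + k)" using rd_le[OF f, of w "w + k"] True by simp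
      moreover have "sl f w (w + k) \<le> rd f (w + k)" using rd_ge[OF f, of w "w + k"] True by simp
      ultimately show ?thesis unfolding q by auto
    next
      case False
      then have k: "k < 0" using \<open>k \<noteq> 0\<close> by simp
      have q: "(f (w + k) - f w) / k = sl f (w + k) w" unfolding sl_def using k
        by (simp add: field_simps)
      have "rd f (w + k) \<le> sl f (w + k) w" using rd_le[OF f, of "w + k" w] k by simp
      moreover have "sl f (w + k) w \<le> rd f w" using rd_ge[OF f, of "w + k" w] k by simp
      ultimately show ?thesis unfolding q by auto
    qed
  qed
  show "((\<lambda>k. (f (w + k) - f w) / k - rd f w) \<longlongrightarrow> 0) (at 0)"
    by (rule Lim_null_comparison[OF ev lim])
qed

lemma cvx_exists_deriv:
  assumes f: "convex_on UNIV f" and ab: "a < b"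
  shows "\<exists>w. a < w \<and> w < b \<and> (f has_real_derivative rd f w) (at w)"
proof -
  have "countable {x. \<not> isCont (rd f) x}" by (rule mono_ctble_discont[OF rd_mono[OF f]])
  then obtain w where "w \<in> {a<..<b}" "w \<notin> {x. \<not> isCont (rd f) x}"
    using open_minus_countable[of "{x. \<not> isCont (rd f) x}" "{a<..<b}"] ab by auto
  then show ?thesis using rd_deriv[OF f] by auto
qed

lemma ccv_exists_deriv:
  assumes f: "concave_on UNIV f" and ab: "a < b"
  shows "\<exists>w D. a < w \<and> w < b \<and> (f has_real_derivative D) (at w)"
proof -
  have "convex_on UNIV (\<lambda>x. - f x)" using f by (simp add: concave_on_def)
  from cvx_exists_deriv[OF this ab] obtain w where w: "a < w" "w < b"
    "((\<lambda>x. - f x) has_real_derivative rd (\<lambda>x. - f x) w) (at w)" by blast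
  from DERIV_minus[OF w(3)] have "(f has_real_derivative - rd (\<lambda>x. - f x) w) (at w)" by simp
  then show ?thesis using w(1,2) by blast
qed

lemma av_cmul: "av g (\<lambda>x. a * f x) e t = a * av g f e t"
  unfolding av_def by (simp add: mult.assoc)

lemma av_neg: "av g (\<lambda>x. - f x) e t = - av g f e t"
  using av_cmul[of g "-1" f e t] by simp

lemma av_concave:
  assumes "good g" "continuous_on UNIV f" "concave_on UNIV f"
  shows "concave_on UNIV (av g f e)"
proof -
  have "convex_on UNIV (av g (\<lambda>x. - f x) e)"
    using assms by (intro av_convex) (auto simp: concave_on_def intro: continuous_intros)
  then show ?thesis unfolding concave_on_def av_neg .
qed

lemma wplus_chord:
  fixes \<phi> :: "real \<Rightarrow> real"
  assumes ccv: "concave_on UNIV \<phi>" and cont: "continuous_on UNIV \<phi>" and mon: "mono \<phi>"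
    and np: "\<forall>t\<le>0. \<phi> t \<le> 0"
    and cond: "\<forall>t<0. \<forall>D. (\<phi> has_real_derivative D) (at t) \<longrightarrow> \<bar>t * D\<bar> \<le> M * \<bar>\<phi> t\<bar>"
    and v: "v < 0" and h: "0 < h" "v + h \<le> 0"
  shows "(\<phi> (v + h) - \<phi> v) * (- v) \<le> M * h * (- \<phi> v)"
proof (rule ccontr)
  assume neg: "\<not> ?thesis"
  define F where "F w = (\<phi> (v + h) - \<phi> w) * (- w) - M * (v + h - w) * (- \<phi> w)" for w
  have Fv: "F v > 0" using neg by (simp add: F_def algebra_simps)
  have "isCont \<phi> x" for x using cont by (simp add: continuous_on_eq_continuous_at)
  then have "isCont F v" unfolding F_def by (intro continuous_intros) (simp_all add: isCont_o2[OF _ \<open>isCont \<phi> _\<close>])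
  then have "\<forall>\<^sub>F w in at v. F w > 0" using Fv
    by (simp add: isCont_def order_tendstoD(1))
  then obtain d where d: "d > 0" "\<And>w. w \<noteq> v \<Longrightarrow> dist w v < d \<Longrightarrow> F w > 0"
    unfolding eventually_at by blast
  obtain w D where w: "v < w" "w < min (v + d) (v + h)" and D: "(\<phi> has_real_derivative D) (at w)"
    using ccv_exists_deriv[OF ccv, of v "min (v + d) (v + h)"] d(1) h(1) by force
  have "dist w v < d" using w by (simp add: dist_real_def)
  then have Fw: "F w > 0" using d(2)[of w] w(1) by simp
  have whv: "w < v + h" using w by simp
  have w0: "w < 0" using whv h by simp
  have "sl \<phi> w (v + h) \<le> D" by (rule ccv_deriv_right[OF ccv D whv])
  then have D1: "\<phi> (v + h) - \<phi> w \<le> D * (v + h - w)" using whv unfolding sl_def by (simp add: divide_le_eq)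
  have "\<phi> w \<le> \<phi> (v + h)" using whv by (intro monoD[OF mon]) simp
  then have "0 \<le> D * (v + h - w)" using D1 by linarith
  then have D0: "0 \<le> D" using whv by (simp add: zero_le_mult_iff)
  have "\<bar>w * D\<bar> \<le> M * \<bar>\<phi> w\<bar>" using cond w0 D by blast
  moreover have "\<bar>w * D\<bar> = (- w) * D" using w0 D0 by (simp add: abs_mult)
  moreover have "\<bar>\<phi> w\<bar> = - \<phi> w" using np w0 by simp
  ultimately have c1: "(- w) * D \<le> M * (- \<phi> w)" by simp
  have "(\<phi> (v + h) - \<phi> w) * (- w) \<le> (D * (v + h - w)) * (- w)"
    using D1 w0 by (intro mult_right_mono) auto
  also have "\<dots> = ((- w) * D) * (v + h - w)" by (simp add: algebra_simps)
  also have "\<dots> \<le> (M * (- \<phi> w)) * (v + h - w)"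
    using c1 whv by (intro mult_right_mono) auto
  finally have "F w \<le> 0" unfolding F_def by (simp add: algebra_simps)
  then show False using Fw by simp
qed

lemma ccv_cont:
  fixes f :: "real \<Rightarrow> real"
  assumes "concave_on UNIV f" shows "continuous_on UNIV f"
proof -
  have "continuous_on UNIV (\<lambda>x. - f x)"
    using assms by (intro convex_on_continuous) (auto simp: concave_on_def)
  then have "continuous_on UNIV (\<lambda>x. - (- f x))" by (rule continuous_on_minus)
  then show ?thesis by simp
qed

lemma cvx_cont:
  fixes f :: "real \<Rightarrow> real"
  assumes "convex_on UNIV f" shows "continuous_on UNIV f"
  using assms by (intro convex_on_continuous) auto

lemma av_shift: "av g (\<lambda>x. f (x + a)) e t = av g f e (t + a)"
  unfolding av_def by (simp add: algebra_simps)

lemma wplus_pt: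
  fixes u h t \<epsilon> \<delta> M a b :: real
  assumes chord: "a * (-(u-h)) \<le> M*h*b" and a: "0 \<le> a" and h: "0 < h" and ut: "u \<le> t + \<epsilon>"
    and t: "t < 0" and key: "\<epsilon> \<le> \<delta> * (-t)" and d: "\<delta> < 1"
  shows "a * (-t) \<le> (M/(1-\<delta>)) * h * b"
proof -
  define q where "q = 1 - \<delta>"
  have q: "0 < q" using d by (simp add: q_def)
  have "q * (-t) = -t - \<delta> * (-t)" by (simp add: q_def algebra_simps)
  also have "\<dots> \<le> -(u-h)" using key ut h by linarith
  finally have "a * (q * (-t)) \<le> a * (-(u-h))" using a by (intro mult_left_mono)
  then have "a * (q * (-t)) \<le> M*h*b" using chord by linarith
  then have "(a * (-t)) * q \<le> (M*h*b/q) * q" using q by (simp add: algebra_simps)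
  then have "a * (-t) \<le> M*h*b/q" using q by (rule mult_right_le_imp_le)
  also have "M*h*b/q = (M/q) * h * b" by simp
  finally show ?thesis by (simp add: q_def)
qed

lemma wplus_av:
  fixes \<phi> g :: "real \<Rightarrow> real"
  assumes g: "good g" and ccv: "concave_on UNIV \<phi>" and mon: "mono \<phi>"
    and lin: "\<forall>t\<ge>-\<delta>. \<phi> t = c * t" and c: "c > 0" and dl: "0 < \<delta>" "\<delta> < 1" and M: "M \<ge> 1"
    and W: "Wplus M \<phi>" and ep: "0 < \<epsilon>" "\<epsilon> < \<delta>\<^sup>2 / 2"
  shows "Wplus (M / (1 - \<delta>)) (av g \<phi> \<epsilon>)"
proof -
  define \<psi> where "\<psi> = av g \<phi> \<epsilon>"
  define M' where "M' = M / (1 - \<delta>)"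
  have cont: "continuous_on UNIV \<phi>" by (rule ccv_cont[OF ccv])
  have dd: "\<delta>\<^sup>2 < \<delta>" using dl by (simp add: power2_eq_square)
  have ed: "\<epsilon> < \<delta> / 2" using ep dd by linarith
  have "\<epsilon> * (1 + \<delta>) < \<epsilon> * 2" using ep dl by simp
  then have ed2: "\<epsilon> * (1 + \<delta>) < \<delta>\<^sup>2" using ep by linarith
  have M'1: "1 \<le> M'" unfolding M'_def using M dl by (simp add: le_divide_eq)
  have ccv\<psi>: "concave_on UNIV \<psi>" unfolding \<psi>_def by (rule av_concave[OF g cont ccv])
  have mon\<psi>: "mono \<psi>" unfolding \<psi>_def using ep by (intro av_mono[OF g cont mon]) simp
  have cont\<psi>: "continuous_on UNIV \<psi>" by (rule ccv_cont[OF ccv\<psi>])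
  have lin\<psi>: "\<psi> t = c * t" if "t \<ge> -\<delta> + \<epsilon>" for t
  proof -
    have "\<forall>s\<in>{-1..1}. \<phi> (t - \<epsilon> * s) = c * (t - \<epsilon> * s) + 0"
    proof
      fix s :: real assume "s \<in> {-1..1}"
      then have "\<epsilon> * s \<le> \<epsilon> * 1" using ep by (intro mult_left_mono) auto
      then have "t - \<epsilon> * s \<ge> -\<delta>" using that by simp
      then show "\<phi> (t - \<epsilon> * s) = c * (t - \<epsilon> * s) + 0" using lin by simp
    qed
    then have "av g \<phi> \<epsilon> t = c * t + 0" by (rule av_lin[OF g])
    then show ?thesis unfolding \<psi>_def by simp
  qed
  have \<psi>0: "\<psi> 0 = 0" using lin\<psi>[of 0] ed dl by simp
  have neg: "\<psi> t < 0" if "t < 0" for t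
  proof (cases "t \<ge> -\<delta> + \<epsilon>")
    case True then show ?thesis using lin\<psi>[OF True] c that by (simp add: mult_pos_neg)
  next
    case False
    then have "\<psi> t \<le> \<psi> (-\<delta> + \<epsilon>)" by (intro monoD[OF mon\<psi>]) simp
    also have "\<dots> = c * (-\<delta> + \<epsilon>)" by (rule lin\<psi>) simp
    also have "\<dots> < 0" using c ed dl by (simp add: mult_pos_neg)
    finally show ?thesis .
  qed
  have Wp: "concave_on {..0} \<phi>" "mono_on {..0} \<phi>" "\<forall>t\<le>0. \<phi> t \<le> 0" "\<phi> 0 = 0" "\<forall>t<0. \<phi> t < 0"
    "\<forall>t<0. \<forall>D. (\<phi> has_real_derivative D) (at t) \<longrightarrow> \<bar>t * D\<bar> \<le> M * \<bar>\<phi> t\<bar>"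
    using W unfolding Wplus_def by blast+
  have deriv: "\<bar>t * D\<bar> \<le> M' * \<bar>\<psi> t\<bar>" if t: "t < 0" and D: "(\<psi> has_real_derivative D) (at t)" for t D
  proof -
    have "sl \<psi> t (t + 1) \<le> D" by (rule ccv_deriv_right[OF ccv\<psi> D]) simp
    moreover have "\<psi> t \<le> \<psi> (t + 1)" by (intro monoD[OF mon\<psi>]) simp
    ultimately have D0: "0 \<le> D" unfolding sl_def by simp
    have abs1: "\<bar>t * D\<bar> = (-t) * D" using t D0 by (simp add: abs_mult)
    have abs2: "\<bar>\<psi> t\<bar> = - \<psi> t" using neg[OF t] by simp
    show ?thesis
    proof (cases "t > -\<delta> + \<epsilon>")
      case True
      have "((\<lambda>x. c * x) has_real_derivative c) (at t)" by (auto intro!: derivative_eq_intros)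
      then have "(\<psi> has_real_derivative c) (at t)"
        by (rule has_field_derivative_transform_within_open[of _ _ _ "{-\<delta> + \<epsilon><..}"])
           (use True lin\<psi> in auto)
      then have "D = c" using D DERIV_unique by blast
      then have "\<bar>t * D\<bar> = \<bar>\<psi> t\<bar>" using lin\<psi>[of t] True by (simp add: abs_mult)
      also have "\<dots> \<le> M' * \<bar>\<psi> t\<bar>" using M'1 by (simp add: mult_le_cancel_right1)
      finally show ?thesis .
    next
      case False
      then have tle: "t \<le> -\<delta> + \<epsilon>" by simp
      have key: "\<epsilon> \<le> \<delta> * (-t)"
      proof -
        have "\<delta> * (\<delta> - \<epsilon>) \<le> \<delta> * (-t)" using tle dl by (intro mult_left_mono) auto
        moreover have "\<epsilon> \<le> \<delta> * (\<delta> - \<epsilon>)" using ed2 by (simp add: power2_eq_square algebra_simps)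
        ultimately show ?thesis by linarith
      qed
      have bound: "(-t) * D \<le> M' * (- \<psi> (t - h))" if h: "0 < h" for h
      proof -
        define \<kappa> where "\<kappa> = 1 - M' * h / (-t)"
        have pt: "\<phi> (t - \<epsilon> * s) \<le> \<kappa> * \<phi> (t - \<epsilon> * s + - h)" if s: "s \<in> {-1..1}" for s
        proof -
          define u where "u = t - \<epsilon> * s"
          have "- (\<epsilon> * s) \<le> \<epsilon> * 1" using s ep by (simp add: mult_left_le abs_le_iff) (smt (verit, best) mult_minus_right mult_left_le)
          then have ut: "u \<le> t + \<epsilon>" unfolding u_def by simp
          have u0: "u < 0" using ut tle ed by linarith
          have chord: "(\<phi> ((u - h) + h) - \<phi> (u - h)) * (- (u - h)) \<le> M * h * (- \<phi> (u - h))"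
            by (rule wplus_chord[OF ccv cont mon Wp(3) Wp(6)]) (use u0 h in auto)
          have a0: "0 \<le> \<phi> u - \<phi> (u - h)" using h by (simp add: monoD[OF mon])
          have "(\<phi> u - \<phi> (u - h)) * (-t) \<le> (M/(1-\<delta>)) * h * (- \<phi> (u - h))"
            by (rule wplus_pt[OF _ a0 h ut t key dl(2)]) (use chord in simp)
          then have "(\<phi> u - \<phi> (u - h)) * (-t) \<le> M' * h * (- \<phi> (u - h))" by (simp add: M'_def)
          then have "\<phi> u * (-t) \<le> (-t - M' * h) * \<phi> (u - h)" by (simp add: algebra_simps)
          also have "(-t - M' * h) = \<kappa> * (-t)" unfolding \<kappa>_def using t by (simp add: field_simps)
          also have "(\<kappa> * (-t)) * \<phi> (u - h) = (\<kappa> * \<phi> (u - h)) * (-t)" by (simp only: ac_simps)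
          finally have "\<phi> u * (-t) \<le> (\<kappa> * \<phi> (u - h)) * (-t)" .
          then have "\<phi> u \<le> \<kappa> * \<phi> (u - h)" by (rule mult_right_le_imp_le) (use t in simp)
          then show ?thesis unfolding u_def by simp
        qed
        have "continuous_on UNIV (\<lambda>x::real. x + - h)" by (intro continuous_intros)
        from continuous_on_compose2[OF cont this subset_UNIV]
        have "continuous_on UNIV (\<lambda>x. \<phi> (x + - h))" .
        then have c2: "continuous_on UNIV (\<lambda>x. \<kappa> * \<phi> (x + - h))" by (rule continuous_on_mult[OF continuous_on_const])
        have "\<psi> t \<le> av g (\<lambda>x. \<kappa> * \<phi> (x + - h)) \<epsilon> t"
          unfolding \<psi>_def by (rule av_le[OF g cont c2]) (use pt in blast)
        also have "\<dots> = \<kappa> * \<psi> (t - h)" unfolding \<psi>_def av_cmul av_shift by simp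
        finally have l1: "\<psi> t \<le> \<kappa> * \<psi> (t - h)" .
        have "D \<le> sl \<psi> (t - h) t" by (rule ccv_deriv_left[OF ccv\<psi> D]) (use h in simp)
        then have "D * h \<le> \<psi> t - \<psi> (t - h)" using h unfolding sl_def by (simp add: le_divide_eq)
        also have "\<dots> \<le> (\<kappa> - 1) * \<psi> (t - h)" using l1 by (simp add: algebra_simps)
        also have "\<dots> = (M' * h / (-t)) * (- \<psi> (t - h))" by (simp add: \<kappa>_def)
        finally have "(D * h) * (-t) \<le> ((M' * h / (-t)) * (- \<psi> (t - h))) * (-t)"
          using t by (intro mult_right_mono) auto
        also have "\<dots> = (M' * (- \<psi> (t - h))) * h" using t by (simp add: field_simps)
        finally have "((-t) * D) * h \<le> (M' * (- \<psi> (t - h))) * h" by (simp add: algebra_simps)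
        then show ?thesis using h by (rule mult_right_le_imp_le)
      qed
      have "isCont \<psi> t" using cont\<psi> by (simp add: continuous_on_eq_continuous_at)
      moreover have "((\<lambda>h. t - h) \<longlongrightarrow> t) (at_right 0)"
        using tendsto_diff[OF tendsto_const[of t] tendsto_ident_at[of 0 "{0<..}"]] by simp
      ultimately have "((\<lambda>h. \<psi> (t - h)) \<longlongrightarrow> \<psi> t) (at_right 0)" by (rule isCont_tendsto_compose)
      then have lim: "((\<lambda>h. M' * (- \<psi> (t - h))) \<longlongrightarrow> M' * (- \<psi> t)) (at_right 0)"
        by (intro tendsto_intros)
      have ev: "\<forall>\<^sub>F h in at_right 0. (-t) * D \<le> M' * (- \<psi> (t - h))"
        using bound eventually_at_right_less[of 0] by (auto elim: eventually_mono)
      have "(-t) * D \<le> M' * (- \<psi> t)" by (rule tendsto_lowerbound[OF lim ev]) simp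
      then show ?thesis using abs1 abs2 by simp
    qed
  qed
  show ?thesis unfolding Wplus_def M'_def[symmetric] \<psi>_def[symmetric]
  proof (intro conjI allI impI)
    show "concave_on {..0} \<psi>" using ccv\<psi> unfolding concave_on_def by (rule convex_on_subset) auto
    show "mono_on {..0} \<psi>" using mon\<psi> by (rule mono_imp_mono_on)
    show "\<psi> t \<le> 0" if "t \<le> 0" for t using monoD[OF mon\<psi> that] \<psi>0 by simp
    show "\<psi> 0 = 0" by (rule \<psi>0)
    show "\<psi> t < 0" if "t < 0" for t by (rule neg[OF that])
    show "\<bar>t * D\<bar> \<le> M' * \<bar>\<psi> t\<bar>" if "t < 0" "(\<psi> has_real_derivative D) (at t)" for t D
      by (rule deriv[OF that])
  qed
qed

lemma cvx_translate:
  fixes f :: "real \<Rightarrow> real"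
  assumes "convex_on UNIV f"
  shows "convex_on UNIV (\<lambda>t. f (t + a) + b)"
proof (rule cvx_slI)
  fix x y z :: real assume xy: "x < y" and yz: "y < z"
  have "sl f (x + a) (y + a) \<le> sl f (y + a) (z + a)"
    by (rule cvx_sl[OF assms]) (use xy yz in simp_all)
  then show "sl (\<lambda>t. f (t + a) + b) x y \<le> sl (\<lambda>t. f (t + a) + b) y z" unfolding sl_def by simp
qed

lemma ccv_translate:
  fixes f :: "real \<Rightarrow> real"
  assumes "concave_on UNIV f"
  shows "concave_on UNIV (\<lambda>t. f (t + a) + b)"
proof -
  have "convex_on UNIV (\<lambda>x. - f x)" using assms by (simp add: concave_on_def)
  then have "convex_on UNIV (\<lambda>t. (\<lambda>x. - f x) (t + a) + (- b))" by (rule cvx_translate)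
  then show ?thesis by (simp add: concave_on_def)
qed

lemma wplus_shift:
  fixes \<psi> :: "real \<Rightarrow> real"
  assumes ccv: "concave_on UNIV \<psi>" and mon: "mono \<psi>"
    and lin: "\<And>t. t \<ge> -\<delta> + \<epsilon> \<Longrightarrow> \<psi> t = c * t" and c: "c > 0" and dl: "0 < \<delta>" "\<delta> < 1"
    and W: "Wplus M' \<psi>" and M': "M' \<ge> 1" and ep: "0 < \<epsilon>" "\<epsilon> \<le> \<delta>\<^sup>2"
  shows "Wplus (M' / (1 - \<delta>)) (\<lambda>t. \<psi> (t + \<epsilon>) - c * \<epsilon>)"
proof -
  define chf where "chf t = \<psi> (t + \<epsilon>) - c * \<epsilon>" for t
  define M'' where "M'' = M' / (1 - \<delta>)"
  have dd: "\<delta>\<^sup>2 < \<delta>" using dl by (simp add: power2_eq_square)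
  have ed: "\<epsilon> < \<delta>" using ep dd by linarith
  have M''1: "1 \<le> M''" unfolding M''_def using M' dl by (simp add: le_divide_eq)
  have ccvchf: "concave_on UNIV chf" unfolding chf_def using ccv_translate[OF ccv, of \<epsilon> "- (c * \<epsilon>)"] by simp
  have monchf: "mono chf"
  proof (rule monoI)
    fix x y :: real assume "x \<le> y"
    then have "\<psi> (x + \<epsilon>) \<le> \<psi> (y + \<epsilon>)" by (intro monoD[OF mon]) simp
    then show "chf x \<le> chf y" unfolding chf_def by simp
  qed
  have linchf: "chf t = c * t" if "t \<ge> -\<delta>" for t
    unfolding chf_def using lin[of "t + \<epsilon>"] that by (simp add: algebra_simps)
  have chf0: "chf 0 = 0" using linchf[of 0] dl by simp
  have neg: "chf t < 0" if "t < 0" for t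
  proof (cases "t \<ge> -\<delta>")
    case True then show ?thesis using linchf[OF True] c that by (simp add: mult_pos_neg)
  next
    case False
    then have "chf t \<le> chf (-\<delta>)" by (intro monoD[OF monchf]) simp
    also have "\<dots> = c * (-\<delta>)" by (rule linchf) simp
    also have "\<dots> < 0" using c dl by (simp add: mult_pos_neg)
    finally show ?thesis .
  qed
  have Wp: "\<forall>t<0. \<forall>D. (\<psi> has_real_derivative D) (at t) \<longrightarrow> \<bar>t * D\<bar> \<le> M' * \<bar>\<psi> t\<bar>"
    "\<forall>t<0. \<psi> t < 0"
    using W unfolding Wplus_def by blast+
  have deriv: "\<bar>t * D\<bar> \<le> M'' * \<bar>chf t\<bar>" if t: "t < 0" and D: "(chf has_real_derivative D) (at t)" for t D
  proof -
    have "sl chf t (t + 1) \<le> D" by (rule ccv_deriv_right[OF ccvchf D]) simp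
    moreover have "chf t \<le> chf (t + 1)" by (intro monoD[OF monchf]) simp
    ultimately have D0: "0 \<le> D" unfolding sl_def by simp
    have abs1: "\<bar>t * D\<bar> = (-t) * D" using t D0 by (simp add: abs_mult)
    have abs2: "\<bar>chf t\<bar> = - chf t" using neg[OF t] by simp
    show ?thesis
    proof (cases "t > -\<delta>")
      case True
      have "((\<lambda>x. c * x) has_real_derivative c) (at t)" by (auto intro!: derivative_eq_intros)
      then have "(chf has_real_derivative c) (at t)"
        by (rule has_field_derivative_transform_within_open[of _ _ _ "{-\<delta><..}"])
           (use True linchf in auto)
      then have "D = c" using D DERIV_unique by blast
      then have "\<bar>t * D\<bar> = \<bar>chf t\<bar>" using linchf[of t] True by (simp add: abs_mult)
      also have "\<dots> \<le> M'' * \<bar>chf t\<bar>" using M''1 by (simp add: mult_le_cancel_right1)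
      finally show ?thesis .
    next
      case False
      then have tle: "t \<le> -\<delta>" by simp
      have "((\<lambda>x. chf x + c * \<epsilon>) has_real_derivative D + 0) (at t)"
        by (intro derivative_intros D)
      then have "((\<lambda>x. \<psi> (x + \<epsilon>)) has_real_derivative D) (at t)" unfolding chf_def by simp
      then have D': "(\<psi> has_real_derivative D) (at (t + \<epsilon>))" by (simp add: DERIV_shift)
      have te: "t + \<epsilon> < 0" using tle ed by linarith
      have "\<bar>(t + \<epsilon>) * D\<bar> \<le> M' * \<bar>\<psi> (t + \<epsilon>)\<bar>" using Wp(1) te D' by blast
      moreover have "\<bar>(t + \<epsilon>) * D\<bar> = (-(t + \<epsilon>)) * D" using te D0 by (simp add: abs_mult)
      moreover have "\<bar>\<psi> (t + \<epsilon>)\<bar> = - \<psi> (t + \<epsilon>)" using Wp(2) te by (simp add: less_imp_le)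
      ultimately have a1: "(-(t + \<epsilon>)) * D \<le> M' * (- \<psi> (t + \<epsilon>))" by simp
      have "- \<psi> (t + \<epsilon>) \<le> - chf t" unfolding chf_def using c ep by simp
      then have "M' * (- \<psi> (t + \<epsilon>)) \<le> M' * (- chf t)" using M' by (intro mult_left_mono) auto
      with a1 have a2: "(-(t + \<epsilon>)) * D \<le> M' * (- chf t)" by linarith
      have key: "\<epsilon> \<le> \<delta> * (-t)"
      proof -
        have "\<delta> * \<delta> \<le> \<delta> * (-t)" using tle dl by (intro mult_left_mono) auto
        then show ?thesis using ep by (simp add: power2_eq_square)
      qed
      have "(1 - \<delta>) * (-t) \<le> -(t + \<epsilon>)" using key by (simp add: algebra_simps)
      then have "((1 - \<delta>) * (-t)) * D \<le> (-(t + \<epsilon>)) * D" using D0 by (rule mult_right_mono)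
      with a2 have a3: "((1 - \<delta>) * (-t)) * D \<le> M' * (- chf t)" by linarith
      have e1: "((-t) * D) * (1 - \<delta>) = ((1 - \<delta>) * (-t)) * D" by (simp only: ac_simps)
      have e2: "(M'' * (- chf t)) * (1 - \<delta>) = M' * (- chf t)" unfolding M''_def using dl by (simp add: field_simps)
      have "((-t) * D) * (1 - \<delta>) \<le> (M'' * (- chf t)) * (1 - \<delta>)" unfolding e1 e2 by (rule a3)
      then have "(-t) * D \<le> M'' * (- chf t)" by (rule mult_right_le_imp_le) (use dl in simp)
      then show ?thesis using abs1 abs2 by simp
    qed
  qed
  show ?thesis unfolding Wplus_def M''_def[symmetric] chf_def[symmetric]
  proof (intro conjI allI impI)
    show "concave_on {..0} chf" using ccvchf unfolding concave_on_def by (rule convex_on_subset) auto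
    show "mono_on {..0} chf" using monchf by (rule mono_imp_mono_on)
    show "chf t \<le> 0" if "t \<le> 0" for t using monoD[OF monchf that] chf0 by simp
    show "chf 0 = 0" by (rule chf0)
    show "chf t < 0" if "t < 0" for t by (rule neg[OF that])
    show "\<bar>t * D\<bar> \<le> M'' * \<bar>chf t\<bar>" if "t < 0" "(chf has_real_derivative D) (at t)" for t D
      by (rule deriv[OF that])
  qed
qed

lemma cvx_sym:
  fixes f :: "real \<Rightarrow> real"
  assumes f: "convex_on UNIV f" and ab: "0 \<le> a" "a \<le> b"
  shows "f (t - a) + f (t + a) \<le> f (t - b) + f (t + b)"
proof (cases "b = 0")
  case True then show ?thesis using ab by simp
next
  case False
  then have b: "0 < b" using ab by simp
  define l where "l = (b - a) / (2 * b)"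
  have l: "0 \<le> l" "l \<le> 1" using ab b by (auto simp: l_def field_simps)
  have e1: "(1 - l) *\<^sub>R (t - b) + l *\<^sub>R (t + b) = t - a" using b by (simp add: l_def field_simps)
  have e2: "(1 - l) *\<^sub>R (t + b) + l *\<^sub>R (t - b) = t + a" using b by (simp add: l_def field_simps)
  have "f (t - a) \<le> (1 - l) * f (t - b) + l * f (t + b)"
    using convex_onD[OF f l, of "t - b" "t + b"] unfolding e1 by simp
  moreover have "f (t + a) \<le> (1 - l) * f (t + b) + l * f (t - b)"
    using convex_onD[OF f l, of "t + b" "t - b"] unfolding e2 by simp
  ultimately show ?thesis by (simp add: algebra_simps)
qed

lemma av_sym:
  assumes g: "good g"
  shows "av g f e t = integral {-1..1} (\<lambda>s. f (t + e * s) * g s)"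
proof -
  have ev: "\<And>s. g (-s) = g s" using g unfolding good_def by blast
  have "integral {- 1..- (- 1)} (\<lambda>x. (\<lambda>s. f (t - e * s) * g s) (- x)) = integral {-1..1} (\<lambda>s. f (t - e * s) * g s)"
    by (rule Henstock_Kurzweil_Integration.integral_reflect_real[where a="-1" and b=1 and f="\<lambda>s. f (t - e * s) * g s"])
  then show ?thesis unfolding av_def by (simp add: ev)
qed

lemma av_mono_eps:
  fixes f :: "real \<Rightarrow> real"
  assumes g: "good g" and cont: "continuous_on UNIV f" and f: "convex_on UNIV f" and e: "0 \<le> e1" "e1 \<le> e2"
  shows "av g f e1 t \<le> av g f e2 t"
proof -
  have two: "2 * av g f e t = integral {-1..1} (\<lambda>s. (f (t - e * s) + f (t + e * s)) * g s)" for e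
  proof -
    have i1: "(\<lambda>s. f (t - e * s) * g s) integrable_on {-1..1}" by (rule av_integrable[OF g cont])
    have i2: "(\<lambda>s. f (t - (- e) * s) * g s) integrable_on {-1..1}" by (rule av_integrable[OF g cont])
    then have i2': "(\<lambda>s. f (t + e * s) * g s) integrable_on {-1..1}" by simp
    have "2 * av g f e t = av g f e t + av g f e t" by simp
    also have "\<dots> = integral {-1..1} (\<lambda>s. f (t - e * s) * g s) + integral {-1..1} (\<lambda>s. f (t + e * s) * g s)"
      using av_sym[OF g, of f e t] unfolding av_def by simp
    also have "\<dots> = integral {-1..1} (\<lambda>s. f (t - e * s) * g s + f (t + e * s) * g s)"
      by (rule integral_add[symmetric, OF i1 i2'])
    also have "\<dots> = integral {-1..1} (\<lambda>s. (f (t - e * s) + f (t + e * s)) * g s)"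
      by (simp add: distrib_right)
    finally show ?thesis .
  qed
  have int: "(\<lambda>s. (f (t - e * s) + f (t + e * s)) * g s) integrable_on {-1..1}" for e
  proof -
    have c0: "continuous_on UNIV (\<lambda>x. f (2 * t - x))"
      by (rule continuous_on_compose2[OF cont _ subset_UNIV]) (intro continuous_intros)
    have c1: "continuous_on UNIV (\<lambda>x. f x + f (2 * t - x))" by (intro continuous_on_add cont c0)
    have "(\<lambda>s. (f (t - e * s) + f (2 * t - (t - e * s))) * g s) integrable_on {-1..1}"
      by (rule av_integrable[OF g c1])
    then show ?thesis by (simp add: algebra_simps)
  qed
  have "integral {-1..1} (\<lambda>s. (f (t - e1 * s) + f (t + e1 * s)) * g s)
      \<le> integral {-1..1} (\<lambda>s. (f (t - e2 * s) + f (t + e2 * s)) * g s)"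
  proof (rule integral_le[OF int int])
    fix s :: real assume "s \<in> {-1..1}"
    have gs: "0 \<le> g s" using g unfolding good_def by blast
    have sy: "f (t - e * s) + f (t + e * s) = f (t - e * \<bar>s\<bar>) + f (t + e * \<bar>s\<bar>)" for e
      by (cases "s \<ge> 0") (simp_all add: add.commute)
    have "f (t - e1 * \<bar>s\<bar>) + f (t + e1 * \<bar>s\<bar>) \<le> f (t - e2 * \<bar>s\<bar>) + f (t + e2 * \<bar>s\<bar>)"
      by (rule cvx_sym[OF f]) (use e in \<open>simp_all add: mult_right_mono\<close>)
    then have "f (t - e1 * s) + f (t + e1 * s) \<le> f (t - e2 * s) + f (t + e2 * s)" unfolding sy .
    then show "(f (t - e1 * s) + f (t + e1 * s)) * g s \<le> (f (t - e2 * s) + f (t + e2 * s)) * g s"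
      using gs by (rule mult_right_mono)
  qed
  then have "2 * av g f e1 t \<le> 2 * av g f e2 t" unfolding two .
  then show ?thesis by simp
qed

lemma lip:
  fixes \<phi> :: "real \<Rightarrow> real"
  assumes f: "convex_on UNIV \<phi>" and mon: "mono \<phi>" and lin: "\<forall>t\<ge>-\<delta>. \<phi> t = c * t" and dl: "0 < \<delta>"
  shows "\<bar>\<phi> x - \<phi> y\<bar> \<le> c * \<bar>x - y\<bar>"
proof -
  have main: "\<phi> v - \<phi> u \<le> c * (v - u)" if uv: "u < v" for u v
  proof -
    have "sl \<phi> u v \<le> c"
    proof (cases "v \<ge> -\<delta>")
      case True
      have "sl \<phi> u v \<le> sl \<phi> v (v + 1)" by (rule cvx_sl[OF f]) (use uv in simp_all)
      also have "sl \<phi> v (v + 1) = c" using lin True unfolding sl_def by (simp add: algebra_simps)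
      finally show ?thesis .
    next
      case False
      have "sl \<phi> u v \<le> sl \<phi> v (-\<delta>)" by (rule cvx_sl[OF f]) (use uv False in simp_all)
      also have "\<dots> \<le> sl \<phi> (-\<delta>) 0" by (rule cvx_sl[OF f]) (use False dl in simp_all)
      also have "sl \<phi> (-\<delta>) 0 = c" using lin dl unfolding sl_def by simp
      finally show ?thesis .
    qed
    then show ?thesis using uv unfolding sl_def by (simp add: divide_le_eq)
  qed
  show ?thesis
  proof (cases x y rule: linorder_cases)
    case less
    have "\<phi> x \<le> \<phi> y" using less by (intro monoD[OF mon]) simp
    then show ?thesis using main[OF less] less by simp
  next
    case greater
    have "\<phi> y \<le> \<phi> x" using greater by (intro monoD[OF mon]) simp
    then show ?thesis using main[OF greater] greater by simp
  qed simp
qed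

lemma av_tendsto:
  fixes f :: "real \<Rightarrow> real"
  assumes g: "good g" and cont: "continuous_on UNIV f"
  shows "((\<lambda>e. av g f e t) \<longlongrightarrow> f t) (at_right 0)"
  unfolding tendsto_iff
proof (intro allI impI)
  fix \<eta> :: real assume \<eta>: "0 < \<eta>"
  have "isCont f t" using cont by (simp add: continuous_on_eq_continuous_at)
  then obtain d where d: "d > 0" "\<And>x. dist x t < d \<Longrightarrow> dist (f x) (f t) < \<eta> / 2"
    unfolding continuous_at_eps_delta using \<eta> by (meson half_gt_zero)
  show "\<forall>\<^sub>F e in at_right 0. dist (av g f e t) (f t) < \<eta>"
    unfolding eventually_at_right_field
  proof (intro exI[of _ d] conjI allI impI)
    show "(0::real) < d" by (rule d(1))
    fix e :: real assume e: "0 < e" "e < d"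
    have "\<forall>s\<in>{-1..1}. \<bar>f (t - e * s) - f t\<bar> \<le> \<eta> / 2"
    proof
      fix s :: real assume s: "s \<in> {-1..1}"
      have "\<bar>s\<bar> \<le> 1" using s by (auto simp: abs_le_iff)
      then have "e * \<bar>s\<bar> \<le> e * 1" using e by (intro mult_left_mono) auto
      then have "\<bar>e * s\<bar> \<le> e" using e by (simp add: abs_mult)
      then have "dist (t - e * s) t < d" using e by (simp add: dist_real_def)
      then have "dist (f (t - e * s)) (f t) < \<eta> / 2" by (rule d(2))
      then show "\<bar>f (t - e * s) - f t\<bar> \<le> \<eta> / 2" by (simp add: dist_real_def)
    qed
    then have "\<bar>av g f e t - f t\<bar> \<le> \<eta> / 2" by (rule av_abs[OF g cont])
    then show "dist (av g f e t) (f t) < \<eta>" using \<eta> by (simp add: dist_real_def)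
  qed
qed

lemma av_unif:
  fixes f :: "real \<Rightarrow> real"
  assumes g: "good g" and cont: "continuous_on UNIV f" and K: "compact K"
  shows "uniform_limit K (\<lambda>e t. av g f e (t + e) - c * e) f (at_right 0)"
  unfolding uniform_limit_iff
proof (intro allI impI)
  fix \<eta> :: real assume \<eta>: "0 < \<eta>"
  obtain R where R: "\<And>x. x \<in> K \<Longrightarrow> \<bar>x\<bar> \<le> R"
    using compact_imp_bounded[OF K] unfolding bounded_iff by auto
  define L where "L = {-R-2..R+2}"
  have "uniformly_continuous_on L f"
    by (rule compact_uniformly_continuous) (use cont continuous_on_subset in \<open>auto simp: L_def\<close>)
  then obtain d where d: "d > 0" "\<And>x x'. x \<in> L \<Longrightarrow> x' \<in> L \<Longrightarrow> dist x' x < d \<Longrightarrow> dist (f x') (f x) < \<eta> / 2"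
    unfolding uniformly_continuous_on_def using \<eta> by (meson half_gt_zero)
  define r where "r = min 1 (min (d / 2) (\<eta> / (2 * (\<bar>c\<bar> + 1))))"
  have r: "0 < r" using d \<eta> by (simp add: r_def)
  show "\<forall>\<^sub>F e in at_right 0. \<forall>x\<in>K. dist (av g f e (x + e) - c * e) (f x) < \<eta>"
    unfolding eventually_at_right_field
  proof (intro exI[of _ r] conjI allI impI ballI)
    show "(0::real) < r" by (rule r)
    fix e x :: real assume e: "0 < e" "e < r" and x: "x \<in> K"
    have e1: "e < 1" and e2: "2 * e < d" and e3: "e * (2 * (\<bar>c\<bar> + 1)) < \<eta>"
      using e by (auto simp: r_def field_simps)
    have xL: "x \<in> L" using R[OF x] by (auto simp: L_def)
    have "\<forall>s\<in>{-1..1}. \<bar>f (x + e - e * s) - f x\<bar> \<le> \<eta> / 2"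
    proof
      fix s :: real assume s: "s \<in> {-1..1}"
      have "\<bar>s\<bar> \<le> 1" using s by (auto simp: abs_le_iff)
      then have "e * \<bar>s\<bar> \<le> e * 1" using e by (intro mult_left_mono) auto
      then have "\<bar>e * s\<bar> \<le> e" using e by (simp add: abs_mult)
      then have a: "\<bar>(x + e - e * s) - x\<bar> \<le> 2 * e" using e by simp
      then have "dist (x + e - e * s) x < d" using e2 by (simp add: dist_real_def)
      moreover have "x + e - e * s \<in> L" using a R[OF x] e1 by (auto simp: L_def)
      ultimately have "dist (f (x + e - e * s)) (f x) < \<eta> / 2" using d(2) xL by blast
      then show "\<bar>f (x + e - e * s) - f x\<bar> \<le> \<eta> / 2" by (simp add: dist_real_def)
    qed
    then have A: "\<bar>av g f e (x + e) - f x\<bar> \<le> \<eta> / 2" by (rule av_abs[OF g cont])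
    have "\<bar>c * e\<bar> \<le> (\<bar>c\<bar> + 1) * e" using e by (simp add: abs_mult)
    also have "\<dots> < \<eta> / 2" using e3 by (simp add: field_simps)
    finally have B: "\<bar>c * e\<bar> < \<eta> / 2" .
    have "\<bar>(av g f e (x + e) - f x) - c * e\<bar> \<le> \<bar>av g f e (x + e) - f x\<bar> + \<bar>c * e\<bar>"
      by (rule abs_triangle_ineq4)
    moreover have "(av g f e (x + e) - f x) - c * e = av g f e (x + e) - c * e - f x" by simp
    ultimately have "\<bar>av g f e (x + e) - c * e - f x\<bar> < \<eta>" using A B by linarith
    then show "dist (av g f e (x + e) - c * e) (f x) < \<eta>" by (simp add: dist_real_def)
  qed
qed

lemma conv_av:
  fixes f g :: "real \<Rightarrow> real"
  assumes g: "good g" and supp: "\<forall>t. \<bar>t\<bar> > 1 \<longrightarrow> g t = 0" and cont: "continuous_on UNIV f" and e: "0 < e"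
  shows "conv f (kernel_eps g e) t = av g f e t"
proof -
  define h where "h r = f (t - e * r) * g r" for r
  have hI: "(h has_integral av g f e t) (cbox (-1) 1)"
    unfolding h_def av_def using av_integrable[OF g cont] by (simp add: integrable_integral)
  have m: "1 / e \<noteq> 0" using e by simp
  from has_integral_affinity[OF hI m, of 0]
  have "((\<lambda>x. h ((1 / e) *\<^sub>R x + 0)) has_integral (1 / \<bar>1 / e\<bar> ^ DIM(real)) *\<^sub>R av g f e t)
        ((\<lambda>x. (1 / (1 / e)) *\<^sub>R x + - ((1 / (1 / e)) *\<^sub>R 0)) ` cbox (- 1) 1)" .
  then have h2: "((\<lambda>x. h (x / e)) has_integral e * av g f e t) ((\<lambda>x. e * x) ` {-1..1})"
    using e by simp
  have h3: "((\<lambda>x. h (x / e)) has_integral e * av g f e t) UNIV"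
  proof (rule has_integral_on_superset[OF h2 _ subset_UNIV])
    fix x assume nx: "x \<notin> (\<lambda>x. e * x) ` {-1..1}"
    have "\<bar>x / e\<bar> > 1"
    proof (rule ccontr)
      assume "\<not> \<bar>x / e\<bar> > 1"
      then have xe: "\<bar>x / e\<bar> \<le> 1" by linarith
      have "x / e \<le> 1" using abs_le_D1[OF xe] .
      moreover have "- (x / e) \<le> 1" using abs_le_D2[OF xe] .
      ultimately have "x / e \<in> {-1..1}" by simp
      moreover have "x = e * (x / e)" using e by simp
      ultimately show False using nx by blast
    qed
    then show "h (x / e) = 0" unfolding h_def using supp by simp
  qed
  have "((\<lambda>x. (1 / e) * h (x / e)) has_integral (1 / e) * (e * av g f e t)) UNIV"
    by (rule has_integral_mult_right[OF h3])
  then have "((\<lambda>s. f (t - s) * kernel_eps g e s) has_integral av g f e t) UNIV"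
    unfolding h_def kernel_eps_def using e by simp
  then show ?thesis unfolding conv_def by (rule integral_unique)
qed

lemma good_from:
  fixes g :: "real \<Rightarrow> real"
  assumes g_smooth: "smooth_real g"
    and g_supp: "\<forall>t. \<bar>t\<bar> > 1 \<longrightarrow> g t = 0"
    and g_even: "\<forall>t. g t = g (- t)"
    and g_bounds: "\<forall>t. 0 \<le> g t \<and> g t \<le> 1"
    and g_int: "(g has_integral 1) UNIV"
  shows "good g"
proof -
  have "\<And>x. (g has_real_derivative (deriv ^^ Suc 0) g x) (at x)"
    using g_smooth unfolding smooth_real_def by (metis funpow_0)
  then have "\<And>x. isCont g x" by (rule DERIV_isCont)
  then have c: "continuous_on UNIV g" by (simp add: continuous_on_eq_continuous_at)
  have "(\<lambda>x. if x \<in> {-1..1} then g x else 0) = g"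
  proof
    fix x show "(if x \<in> {-1..1} then g x else 0) = g x" using g_supp by (auto simp: abs_le_iff)
  qed
  then have "((\<lambda>x. if x \<in> {-1..1} then g x else 0) has_integral 1) UNIV" using g_int by simp
  then have i: "(g has_integral 1) {-1..1}" by (simp only: has_integral_restrict_UNIV)
  show ?thesis unfolding good_def using c i g_bounds g_even by auto
qed

lemma lin_convex:
  fixes f :: "real \<Rightarrow> real"
  assumes lin: "\<forall>t\<ge>a. f t = c * t"
  shows "convex_on {a..} f"
proof (rule convex_onI)
  fix u x y :: real assume u: "0 < u" "u < 1" and x: "x \<in> {a..}" and y: "y \<in> {a..}"
  have "(1 - u) * a \<le> (1 - u) * x" using u x by (intro mult_left_mono) auto
  moreover have "u * a \<le> u * y" using u y by (intro mult_left_mono) auto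
  ultimately have "a \<le> (1 - u) * x + u * y" by (simp add: algebra_simps)
  then have "f ((1 - u) *\<^sub>R x + u *\<^sub>R y) = c * ((1 - u) * x + u * y)" using lin by simp
  also have "\<dots> = (1 - u) * (c * x) + u * (c * y)" by (simp add: algebra_simps)
  also have "\<dots> = (1 - u) * f x + u * f y" using lin x y by simp
  finally show "f ((1 - u) *\<^sub>R x + u *\<^sub>R y) \<le> (1 - u) * f x + u * f y" by simp
qed simp

lemma lin_concave:
  fixes f :: "real \<Rightarrow> real"
  assumes lin: "\<forall>t\<ge>a. f t = c * t"
  shows "concave_on {a..} f"
proof -
  have "\<forall>t\<ge>a. - f t = (- c) * t" using lin by simp
  then have "convex_on {a..} (\<lambda>t. - f t)" by (rule lin_convex)
  then show ?thesis by (simp add: concave_on_def)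
qed

lemma mono_glue:
  fixes f :: "real \<Rightarrow> real"
  assumes m: "mono_on {..0} f" and lin: "\<forall>t\<ge>-\<delta>. f t = c * t" and c: "c > 0" and d: "\<delta> > 0"
  shows "mono f"
proof (rule monoI)
  fix x y :: real assume xy: "x \<le> y"
  show "f x \<le> f y"
  proof (cases "y \<le> 0")
    case True then show ?thesis using m xy by (auto simp: mono_on_def)
  next
    case y: False
    show ?thesis
    proof (cases "x \<ge> -\<delta>")
      case True
      then have "f x = c * x" "f y = c * y" using lin xy by auto
      then show ?thesis using xy c by (simp add: mult_left_mono)
    next
      case False
      have "f x \<le> f (-\<delta>)" using m False d by (auto simp: mono_on_def)
      also have "\<dots> = c * (-\<delta>)" using lin by simp
      also have "\<dots> \<le> c * y" using c y d by (intro mult_left_mono) auto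
      also have "c * y = f y" using lin y d by simp
      finally show ?thesis .
    qed
  qed
qed

lemma av_linreg:
  fixes f :: "real \<Rightarrow> real"
  assumes g: "good g" and lin: "\<forall>t\<ge>-\<delta>. f t = c * t" and e: "0 \<le> e" and t: "t \<ge> -\<delta> + e"
  shows "av g f e t = c * t"
proof -
  have "\<forall>s\<in>{-1..1}. f (t - e * s) = c * (t - e * s) + 0"
  proof
    fix s :: real assume "s \<in> {-1..1}"
    then have "e * s \<le> e * 1" using e by (intro mult_left_mono) auto
    then have "t - e * s \<ge> -\<delta>" using t by simp
    then show "f (t - e * s) = c * (t - e * s) + 0" using lin by simp
  qed
  then have "av g f e t = c * t + 0" by (rule av_lin[OF g])
  then show ?thesis by simp
qed

theorem lemma2p5:
  fixes c \<delta> M :: real and \<phi> g :: "real \<Rightarrow> real"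
  assumes c_pos: "c > 0" and delta: "0 < \<delta>" "\<delta> < 1" and M: "M \<ge> 1"
    and chi_lin: "\<forall>t\<ge>-\<delta>. \<phi> t = c * t"
    and chi_class: "Wminus_tilde \<phi> \<or> Wplus M \<phi>"
    and g_smooth: "smooth_real g"
    and g_supp: "\<forall>t. \<bar>t\<bar> > 1 \<longrightarrow> g t = 0"
    and g_even: "\<forall>t. g t = g (- t)"
    and g_bounds: "\<forall>t. 0 \<le> g t \<and> g t \<le> 1"
    and g_int: "(g has_integral 1) UNIV"
  shows
    "(Wminus_tilde \<phi> \<longrightarrow>
        (\<forall>\<epsilon>. 0 < \<epsilon> \<and> \<epsilon> < \<delta> \<longrightarrow> Wminus_tilde (conv \<phi> (kernel_eps g \<epsilon>)))
      \<and> (\<forall>t. (\<forall>\<epsilon>1 \<epsilon>2. 0 < \<epsilon>1 \<and> \<epsilon>1 \<le> \<epsilon>2 \<longrightarrow>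
                 conv \<phi> (kernel_eps g \<epsilon>1) t \<le> conv \<phi> (kernel_eps g \<epsilon>2) t)
             \<and> ((\<lambda>\<epsilon>. conv \<phi> (kernel_eps g \<epsilon>) t) \<longlongrightarrow> \<phi> t) (at_right 0))
      \<and> (\<forall>\<epsilon>>0. \<forall>t. conv \<phi> (kernel_eps g \<epsilon>) t - \<phi> t \<le> c * \<epsilon>))
   \<and> (Wplus M \<phi> \<longrightarrow>
        (\<forall>\<epsilon>. 0 < \<epsilon> \<and> \<epsilon> < \<delta>\<^sup>2 / 2 \<longrightarrow>
               Wplus (M / (1 - \<delta>)) (conv \<phi> (kernel_eps g \<epsilon>)))
      \<and> (\<forall>\<epsilon>. 0 < \<epsilon> \<and> \<epsilon> < \<delta>\<^sup>2 / 8 \<longrightarrow>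
               Wplus (M / (1 - \<delta>)\<^sup>2) (\<lambda>t. conv \<phi> (kernel_eps g \<epsilon>) (t + \<epsilon>) - c * \<epsilon>)
             \<and> (\<forall>t. conv \<phi> (kernel_eps g \<epsilon>) (t + \<epsilon>) - c * \<epsilon> \<ge> \<phi> t - c * \<epsilon>))
      \<and> (\<forall>K. compact K \<longrightarrow>
             uniform_limit K (\<lambda>\<epsilon> t. conv \<phi> (kernel_eps g \<epsilon>) (t + \<epsilon>) - c * \<epsilon>) \<phi> (at_right 0)))"
proof -
  have g: "good g" by (rule good_from[OF g_smooth g_supp g_even g_bounds g_int])
  have cav: "conv \<phi> (kernel_eps g e) = av g \<phi> e" if "0 < e" "continuous_on UNIV \<phi>" for e
    using conv_av[OF g g_supp that(2) that(1)] by (intro ext) simp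
  have part1: "(\<forall>\<epsilon>. 0 < \<epsilon> \<and> \<epsilon> < \<delta> \<longrightarrow> Wminus_tilde (conv \<phi> (kernel_eps g \<epsilon>)))
      \<and> (\<forall>t. (\<forall>\<epsilon>1 \<epsilon>2. 0 < \<epsilon>1 \<and> \<epsilon>1 \<le> \<epsilon>2 \<longrightarrow>
                 conv \<phi> (kernel_eps g \<epsilon>1) t \<le> conv \<phi> (kernel_eps g \<epsilon>2) t)
             \<and> ((\<lambda>\<epsilon>. conv \<phi> (kernel_eps g \<epsilon>) t) \<longlongrightarrow> \<phi> t) (at_right 0))
      \<and> (\<forall>\<epsilon>>0. \<forall>t. conv \<phi> (kernel_eps g \<epsilon>) t - \<phi> t \<le> c * \<epsilon>)" if Wm: "Wminus_tilde \<phi>"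
  proof -
    have Wm': "convex_on {..0} \<phi>" "mono_on {..0} \<phi>" using Wm unfolding Wminus_tilde_def by blast+
    have cvx: "convex_on UNIV \<phi>" by (rule cvx_glue[OF Wm'(1) lin_convex[OF chi_lin]]) (use delta in simp)
    have cont: "continuous_on UNIV \<phi>" by (rule cvx_cont[OF cvx])
    have mon: "mono \<phi>" by (rule mono_glue[OF Wm'(2) chi_lin c_pos delta(1)])
    have A: "Wminus_tilde (conv \<phi> (kernel_eps g \<epsilon>))" if e: "0 < \<epsilon>" "\<epsilon> < \<delta>" for \<epsilon>
    proof -
      have cv: "convex_on UNIV (av g \<phi> \<epsilon>)" by (rule av_convex[OF g cont cvx])
      have mv: "mono (av g \<phi> \<epsilon>)" using e by (intro av_mono[OF g cont mon]) simp
      have z: "av g \<phi> \<epsilon> 0 = 0" using av_linreg[OF g chi_lin, of \<epsilon> 0] e by simp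
      have nz: "av g \<phi> \<epsilon> (-\<delta> + \<epsilon>) = c * (-\<delta> + \<epsilon>)" using av_linreg[OF g chi_lin, of \<epsilon> "-\<delta> + \<epsilon>"] e by simp
      have "c * (-\<delta> + \<epsilon>) \<noteq> 0" using c_pos e by simp
      then have ex: "\<exists>t\<le>0. av g \<phi> \<epsilon> t \<noteq> 0" using nz e by (intro exI[of _ "-\<delta> + \<epsilon>"]) simp
      have "Wminus_tilde (av g \<phi> \<epsilon>)" unfolding Wminus_tilde_def
      proof (intro conjI allI impI)
        show "convex_on {..0} (av g \<phi> \<epsilon>)" using cv by (rule convex_on_subset) auto
        show "mono_on {..0} (av g \<phi> \<epsilon>)" using mv by (rule mono_imp_mono_on)
        show "av g \<phi> \<epsilon> t \<le> 0" if "t \<le> 0" for t using monoD[OF mv that] z by simp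
        show "av g \<phi> \<epsilon> 0 = 0" by (rule z)
        show "\<exists>t\<le>0. av g \<phi> \<epsilon> t \<noteq> 0" by (rule ex)
      qed
      then show ?thesis using cav[OF e(1) cont] by simp
    qed
    have B: "conv \<phi> (kernel_eps g e1) t \<le> conv \<phi> (kernel_eps g e2) t" if "0 < e1" "e1 \<le> e2" for e1 e2 t
    proof -
      have "av g \<phi> e1 t \<le> av g \<phi> e2 t" by (rule av_mono_eps[OF g cont cvx]) (use that in simp_all)
      moreover have "0 < e2" using that by simp
      ultimately show ?thesis using cav[OF that(1) cont] cav[OF \<open>0 < e2\<close> cont] by simp
    qed
    have C: "((\<lambda>\<epsilon>. conv \<phi> (kernel_eps g \<epsilon>) t) \<longlongrightarrow> \<phi> t) (at_right 0)" for t
    proof -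
      have "\<forall>\<^sub>F e in at_right 0. av g \<phi> e t = conv \<phi> (kernel_eps g e) t"
        using eventually_at_right_less[of 0] by eventually_elim (simp add: cav[OF _ cont])
      then show ?thesis by (rule Lim_transform_eventually[OF av_tendsto[OF g cont, of t]])
    qed
    have D: "conv \<phi> (kernel_eps g e) t - \<phi> t \<le> c * e" if e: "0 < e" for e t
    proof -
      have "\<forall>s\<in>{-1..1}. \<bar>\<phi> (t - e * s) - \<phi> t\<bar> \<le> c * e"
      proof
        fix s :: real assume s: "s \<in> {-1..1}"
        have "\<bar>s\<bar> \<le> 1" using s by (auto simp: abs_le_iff)
        then have "e * \<bar>s\<bar> \<le> e * 1" using e by (intro mult_left_mono) auto
        then have "\<bar>e * s\<bar> \<le> e" using e by (simp add: abs_mult)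
        then have "c * \<bar>(t - e * s) - t\<bar> \<le> c * e" using c_pos by (intro mult_left_mono) auto
        moreover have "\<bar>\<phi> (t - e * s) - \<phi> t\<bar> \<le> c * \<bar>(t - e * s) - t\<bar>"
          by (rule lip[OF cvx mon chi_lin delta(1)])
        ultimately show "\<bar>\<phi> (t - e * s) - \<phi> t\<bar> \<le> c * e" by linarith
      qed
      then have "\<bar>av g \<phi> e t - \<phi> t\<bar> \<le> c * e" by (rule av_abs[OF g cont])
      then show ?thesis using cav[OF e cont] by simp
    qed
    show ?thesis using A B C D by blast
  qed
  have part2: "(\<forall>\<epsilon>. 0 < \<epsilon> \<and> \<epsilon> < \<delta>\<^sup>2 / 2 \<longrightarrow>
               Wplus (M / (1 - \<delta>)) (conv \<phi> (kernel_eps g \<epsilon>)))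
      \<and> (\<forall>\<epsilon>. 0 < \<epsilon> \<and> \<epsilon> < \<delta>\<^sup>2 / 8 \<longrightarrow>
               Wplus (M / (1 - \<delta>)\<^sup>2) (\<lambda>t. conv \<phi> (kernel_eps g \<epsilon>) (t + \<epsilon>) - c * \<epsilon>)
             \<and> (\<forall>t. conv \<phi> (kernel_eps g \<epsilon>) (t + \<epsilon>) - c * \<epsilon> \<ge> \<phi> t - c * \<epsilon>))
      \<and> (\<forall>K. compact K \<longrightarrow>
             uniform_limit K (\<lambda>\<epsilon> t. conv \<phi> (kernel_eps g \<epsilon>) (t + \<epsilon>) - c * \<epsilon>) \<phi> (at_right 0))"
    if Wp: "Wplus M \<phi>"
  proof -
    have Wp': "concave_on {..0} \<phi>" "mono_on {..0} \<phi>" using Wp unfolding Wplus_def by blast+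
    have ccv: "concave_on UNIV \<phi>" by (rule ccv_glue[OF Wp'(1) lin_concave[OF chi_lin]]) (use delta in simp)
    have cont: "continuous_on UNIV \<phi>" by (rule ccv_cont[OF ccv])
    have mon: "mono \<phi>" by (rule mono_glue[OF Wp'(2) chi_lin c_pos delta(1)])
    have dd: "\<delta>\<^sup>2 < \<delta>" using delta by (simp add: power2_eq_square)
    have A: "Wplus (M / (1 - \<delta>)) (conv \<phi> (kernel_eps g \<epsilon>))" if e: "0 < \<epsilon>" "\<epsilon> < \<delta>\<^sup>2 / 2" for \<epsilon>
      using wplus_av[OF g ccv mon chi_lin c_pos delta M Wp e] cav[OF e(1) cont] by simp
    have B: "Wplus (M / (1 - \<delta>)\<^sup>2) (\<lambda>t. conv \<phi> (kernel_eps g \<epsilon>) (t + \<epsilon>) - c * \<epsilon>)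
             \<and> (\<forall>t. conv \<phi> (kernel_eps g \<epsilon>) (t + \<epsilon>) - c * \<epsilon> \<ge> \<phi> t - c * \<epsilon>)"
      if e: "0 < \<epsilon>" "\<epsilon> < \<delta>\<^sup>2 / 8" for \<epsilon>
    proof -
      have e2: "\<epsilon> < \<delta>\<^sup>2 / 2" using e by simp
      have e3: "\<epsilon> \<le> \<delta>\<^sup>2" using e by simp
      have W1: "Wplus (M / (1 - \<delta>)) (av g \<phi> \<epsilon>)" by (rule wplus_av[OF g ccv mon chi_lin c_pos delta M Wp e(1) e2])
      have M1: "1 \<le> M / (1 - \<delta>)" using M delta by (simp add: le_divide_eq)
      have ccv2: "concave_on UNIV (av g \<phi> \<epsilon>)" by (rule av_concave[OF g cont ccv])
      have mon2: "mono (av g \<phi> \<epsilon>)" using e by (intro av_mono[OF g cont mon]) simp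
      have lin2: "av g \<phi> \<epsilon> t = c * t" if "t \<ge> -\<delta> + \<epsilon>" for t
        by (rule av_linreg[OF g chi_lin]) (use e that in simp_all)
      have W0: "Wplus (M / (1 - \<delta>) / (1 - \<delta>)) (\<lambda>t. av g \<phi> \<epsilon> (t + \<epsilon>) - c * \<epsilon>)"
        by (rule wplus_shift[OF ccv2 mon2 lin2 c_pos delta W1 M1 e(1) e3])
      have eq: "M / (1 - \<delta>) / (1 - \<delta>) = M / (1 - \<delta>)\<^sup>2" by (simp add: power2_eq_square)
      have W2: "Wplus (M / (1 - \<delta>)\<^sup>2) (\<lambda>t. conv \<phi> (kernel_eps g \<epsilon>) (t + \<epsilon>) - c * \<epsilon>)"
        using W0 unfolding eq cav[OF e(1) cont] .
      have ge: "\<phi> t \<le> av g \<phi> \<epsilon> (t + \<epsilon>)" for t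
      proof (rule av_lower[OF g cont], intro ballI)
        fix s :: real assume "s \<in> {-1..1}"
        then have "\<epsilon> * s \<le> \<epsilon> * 1" using e by (intro mult_left_mono) auto
        then have "t \<le> t + \<epsilon> - \<epsilon> * s" by simp
        then show "\<phi> t \<le> \<phi> (t + \<epsilon> - \<epsilon> * s)" by (rule monoD[OF mon])
      qed
      show ?thesis using W2 ge cav[OF e(1) cont] by simp
    qed
    have C: "uniform_limit K (\<lambda>\<epsilon> t. conv \<phi> (kernel_eps g \<epsilon>) (t + \<epsilon>) - c * \<epsilon>) \<phi> (at_right 0)"
      if K: "compact K" for K
    proof -
      have "\<forall>\<^sub>F e in at_right 0. \<forall>t\<in>K. av g \<phi> e (t + e) - c * e = conv \<phi> (kernel_eps g e) (t + e) - c * e"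
        using eventually_at_right_less[of 0] by eventually_elim (simp add: cav[OF _ cont])
      then have "uniform_limit K (\<lambda>e t. av g \<phi> e (t + e) - c * e) \<phi> (at_right 0) \<longleftrightarrow>
                 uniform_limit K (\<lambda>e t. conv \<phi> (kernel_eps g e) (t + e) - c * e) \<phi> (at_right 0)"
        by (rule uniform_limit_cong) simp
      then show ?thesis using av_unif[OF g cont K, of c] by simp
    qed
    show ?thesis using A B C by blast
  qed
  show ?thesis using part1 part2 by blast
qed

end
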